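(* Let $G$ be a connected undirected graph with positive edge weights, weighted adjacency matrix $\mathbf{A}$, diagonal degree matrix $\mathbf{D}$ and Laplacian $\mathbf{L}=\mathbf{D}-\mathbf{A}$. Let $\mathbf{\Pi}=\mathbf{I}-\frac{1}{n}\mathbf{1}\mathbf{1}^\top$ and $\pi=\frac{\mathbf{D}\mathbf{1}}{\mathbf{1}^\top\mathbf{D}\mathbf{1}}$. Then for every vertex $u$, $$\mathbf{L}^+(\mathbf{1_u}-\pi)=\frac12\,\mathbf{\Pi}\mathbf{D}^{-1}\sum_{t=0}^{\infty}\left(\left(\tfrac12\mathbf{I}+\tfrac12\mathbf{A}\mathbf{D}^{-1}\right)^t\mathbf{1_u}-\pi\right).$$
   Context: $\mathbf{L}^+$ denotes the Moore–Penrose pseudoinverse, $\mathbf{1}$ the all-ones vector, $\mathbf{1_u}$ the indicator vector of vertex $u$, and $n$ the number of vertices. *)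

theory Defs
  imports "HOL-Analysis.Analysis"
begin

primrec matpow :: "'a::comm_ring_1 ^ 'n ^ 'n \<Rightarrow> nat \<Rightarrow> 'a ^ 'n ^ 'n" where
  "matpow M 0 = mat 1"
| "matpow M (Suc k) = M ** matpow M k"

definition pinv :: "real ^ 'n ^ 'n \<Rightarrow> real ^ 'n ^ 'n" where
  "pinv A = (THE X. A ** X ** A = A \<and> X ** A ** X = X \<and>
                    transpose (A ** X) = A ** X \<and> transpose (X ** A) = X ** A)"

text \<open>Weighted undirected graph on the vertex type 'n given by its weighted adjacency matrix:
  symmetric, nonnegative weights (edge iff weight positive), no self-loops.\<close>
definition weighted_graph :: "real ^ 'n ^ 'n \<Rightarrow> bool" where
  "weighted_graph A \<longleftrightarrow> (\<forall>i j. A $ i $ j = A $ j $ i) \<and> (\<forall>i j. A $ i $ j \<ge> 0) \<and> (\<forall>i. A $ i $ i = 0)"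

definition graph_connected :: "real ^ 'n ^ 'n \<Rightarrow> bool" where
  "graph_connected A \<longleftrightarrow> (\<forall>u v. (u, v) \<in> {(i, j). A $ i $ j > 0}\<^sup>*)"

definition degree_matrix :: "real ^ 'n ^ 'n \<Rightarrow> real ^ 'n ^ 'n" where
  "degree_matrix A = (\<chi> i j. if i = j then (\<Sum>k\<in>UNIV. A $ i $ k) else 0)"

definition laplacian :: "real ^ 'n ^ 'n \<Rightarrow> real ^ 'n ^ 'n" where
  "laplacian A = degree_matrix A - A"

definition ones :: "real ^ 'n" where "ones = (\<chi> i. 1)"

definition indic :: "'n \<Rightarrow> real ^ 'n" where "indic u = (\<chi> i. if i = u then 1 else 0)"

definition centering :: "real ^ 'n ^ 'n" where
  "centering = mat 1 - (1 / real CARD('n)) *\<^sub>R (\<chi> i j. 1)"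

definition stationary :: "real ^ 'n ^ 'n \<Rightarrow> real ^ 'n" where
  "stationary A = (1 / (ones \<bullet> (degree_matrix A *v ones))) *\<^sub>R (degree_matrix A *v ones)"

definition lazy_walk :: "real ^ 'n ^ 'n \<Rightarrow> real ^ 'n ^ 'n" where
  "lazy_walk A = (1/2) *\<^sub>R mat 1 + (1/2) *\<^sub>R (A ** matrix_inv (degree_matrix A))"

end

theory Submission
  imports Defs
begin

lemma mm_entry: "(X ** Y) $ i $ j = (\<Sum>k\<in>UNIV. X $ i $ k * Y $ k $ j)"
  by (simp add: matrix_matrix_mult_def)

lemma mv_entry: "(X *v x) $ i = (\<Sum>j\<in>UNIV. X $ i $ j * x $ j)"
  by (simp add: matrix_vector_mult_def)

lemma matrix_inv_eqI:
  fixes X Y :: "real ^ 'n ^ 'n"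
  assumes "X ** Y = mat 1" "Y ** X = mat 1"
  shows "matrix_inv X = Y"
proof -
  have ex: "\<exists>Z. X ** Z = mat 1 \<and> Z ** X = mat 1" using assms by blast
  define Z where "Z = matrix_inv X"
  have Z: "X ** Z = mat 1 \<and> Z ** X = mat 1"
    unfolding Z_def matrix_inv_def by (rule someI_ex[OF ex])
  have "Z = Z ** (X ** Y)" using assms by simp
  also have "\<dots> = (Z ** X) ** Y" by (simp add: matrix_mul_assoc)
  also have "\<dots> = Y" using Z by simp
  finally show ?thesis unfolding Z_def .
qed

definition penrose :: "real ^ 'n ^ 'n \<Rightarrow> real ^ 'n ^ 'n \<Rightarrow> bool" where
  "penrose M X \<longleftrightarrow> M ** X ** M = M \<and> X ** M ** X = X \<and>
                    transpose (M ** X) = M ** X \<and> transpose (X ** M) = X ** M"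

lemma penrose_unique:
  assumes X: "penrose M X" and Y: "penrose M Y"
  shows "X = Y"
proof -
  have x1: "M ** X ** M = M" and x2: "X ** M ** X = X" and x3: "transpose (M ** X) = M ** X"
    and x4: "transpose (X ** M) = X ** M" using X by (auto simp: penrose_def)
  have y1: "M ** Y ** M = M" and y2: "Y ** M ** Y = Y" and y3: "transpose (M ** Y) = M ** Y"
    and y4: "transpose (Y ** M) = Y ** M" using Y by (auto simp: penrose_def)
  have a: "M ** X = M ** Y"
  proof -
    have "M ** X = transpose (M ** X)" using x3 by simp
    also have "\<dots> = transpose (M ** Y ** M ** X)" using y1 by simp
    also have "\<dots> = transpose ((M ** Y) ** (M ** X))" by (simp add: matrix_mul_assoc)
    also have "\<dots> = transpose (M ** X) ** transpose (M ** Y)" by (simp add: matrix_transpose_mul)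
    also have "\<dots> = M ** X ** (M ** Y)" using x3 y3 by simp
    also have "\<dots> = M ** Y" using x1 by (simp add: matrix_mul_assoc)
    finally show ?thesis .
  qed
  have b: "X ** M = Y ** M"
  proof -
    have "X ** M = transpose (X ** M)" using x4 by simp
    also have "\<dots> = transpose (X ** (M ** Y ** M))" using y1 by simp
    also have "\<dots> = transpose ((X ** M) ** (Y ** M))" by (simp add: matrix_mul_assoc)
    also have "\<dots> = transpose (Y ** M) ** transpose (X ** M)" by (simp add: matrix_transpose_mul)
    also have "\<dots> = Y ** M ** (X ** M)" using x4 y4 by simp
    also have "\<dots> = Y ** M" using x1 by (metis matrix_mul_assoc)
    finally show ?thesis .
  qed
  have "X = X ** M ** X" using x2 by simp
  also have "\<dots> = Y ** M ** X" using b by simp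
  also have "\<dots> = Y ** (M ** X)" by (simp add: matrix_mul_assoc)
  also have "\<dots> = Y ** (M ** Y)" using a by simp
  also have "\<dots> = Y" using y2 by (simp add: matrix_mul_assoc)
  finally show ?thesis .
qed

lemma pinv_eqI: "penrose M X \<Longrightarrow> pinv M = X"
  unfolding pinv_def
  apply (rule the_equality)
   apply (simp add: penrose_def)
  using penrose_unique unfolding penrose_def by blast

lemma matpow_add: "matpow M (a + b) = matpow M a ** matpow M b"
  by (induction a) (simp_all add: matrix_mul_assoc)

definition norm1 :: "real ^ 'n \<Rightarrow> real" where "norm1 x = (\<Sum>i\<in>UNIV. \<bar>x $ i\<bar>)"

definition colstoch :: "real ^ 'n ^ 'n \<Rightarrow> bool" where
  "colstoch M \<longleftrightarrow> (\<forall>i j. M $ i $ j \<ge> 0) \<and> (\<forall>j. (\<Sum>i\<in>UNIV. M $ i $ j) = 1)"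

lemma colstoch_id: "colstoch (mat 1)"
  by (simp add: colstoch_def mat_def)

lemma colstoch_mul: assumes "colstoch M" "colstoch N" shows "colstoch (M ** N)"
proof -
  have "(\<Sum>i\<in>UNIV. (M ** N) $ i $ j) = 1" for j
  proof -
    have "(\<Sum>i\<in>UNIV. (M ** N) $ i $ j) = (\<Sum>k\<in>UNIV. (\<Sum>i\<in>UNIV. M $ i $ k) * N $ k $ j)"
      by (simp add: mm_entry sum_distrib_right) (rule sum.swap)
    also have "\<dots> = 1" using assms by (simp add: colstoch_def)
    finally show ?thesis .
  qed
  moreover have "(M ** N) $ i $ j \<ge> 0" for i j
    using assms unfolding mm_entry colstoch_def by (intro sum_nonneg) auto
  ultimately show ?thesis by (simp add: colstoch_def)
qed

lemma colstoch_matpow: "colstoch M \<Longrightarrow> colstoch (matpow M t)"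
  by (induction t) (simp_all add: colstoch_id colstoch_mul)

lemma colstoch_sum: assumes "colstoch M" shows "(\<Sum>i\<in>UNIV. (M *v x) $ i) = (\<Sum>i\<in>UNIV. x $ i)"
proof -
  have "(\<Sum>i\<in>UNIV. (M *v x) $ i) = (\<Sum>j\<in>UNIV. (\<Sum>i\<in>UNIV. M $ i $ j) * x $ j)"
    by (simp add: mv_entry sum_distrib_right) (rule sum.swap)
  then show ?thesis using assms by (simp add: colstoch_def)
qed

lemma dobrushin:
  fixes M :: "real ^ 'n ^ 'n"
  assumes "colstoch M" "\<And>i j. M $ i $ j \<ge> \<delta>" "\<delta> * (\<Sum>i\<in>UNIV. x $ i) = 0"
  shows "norm1 (M *v x) \<le> (1 - real CARD('n) * \<delta>) * norm1 x"
proof -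
  have e: "(M *v x) $ i = (\<Sum>j\<in>UNIV. (M $ i $ j - \<delta>) * x $ j)" for i
  proof -
    have "(\<Sum>j\<in>UNIV. (M $ i $ j - \<delta>) * x $ j) = (\<Sum>j\<in>UNIV. M $ i $ j * x $ j) - \<delta> * (\<Sum>j\<in>UNIV. x $ j)"
      by (simp add: algebra_simps sum_subtractf sum_distrib_left)
    then show ?thesis using assms(3) by (simp add: mv_entry)
  qed
  have "\<bar>(M *v x) $ i\<bar> \<le> (\<Sum>j\<in>UNIV. (M $ i $ j - \<delta>) * \<bar>x $ j\<bar>)" for i
  proof -
    have "\<bar>(M *v x) $ i\<bar> \<le> (\<Sum>j\<in>UNIV. \<bar>(M $ i $ j - \<delta>) * x $ j\<bar>)"
      unfolding e by (rule sum_abs)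
    also have "\<dots> = (\<Sum>j\<in>UNIV. (M $ i $ j - \<delta>) * \<bar>x $ j\<bar>)"
      using assms(2) by (intro sum.cong) (auto simp: abs_mult)
    finally show ?thesis .
  qed
  then have "norm1 (M *v x) \<le> (\<Sum>i\<in>UNIV. \<Sum>j\<in>UNIV. (M $ i $ j - \<delta>) * \<bar>x $ j\<bar>)"
    unfolding norm1_def by (rule sum_mono)
  also have "\<dots> = (\<Sum>j\<in>UNIV. (\<Sum>i\<in>UNIV. (M $ i $ j - \<delta>)) * \<bar>x $ j\<bar>)"
    by (simp add: sum_distrib_right) (rule sum.swap)
  also have "\<dots> = (\<Sum>j\<in>UNIV. (1 - real CARD('n) * \<delta>) * \<bar>x $ j\<bar>)"
    using assms(1) by (simp add: sum_subtractf colstoch_def)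
  also have "\<dots> = (1 - real CARD('n) * \<delta>) * norm1 x"
    by (simp add: norm1_def sum_distrib_left)
  finally show ?thesis .
qed

lemma colstoch_nonexp: "colstoch M \<Longrightarrow> norm1 (M *v x) \<le> norm1 x"
  using dobrushin[of M 0 x] by (simp add: colstoch_def)

definition deg :: "real ^ 'n ^ 'n \<Rightarrow> 'n \<Rightarrow> real" where "deg A i = (\<Sum>k\<in>UNIV. A $ i $ k)"
definition dinv :: "real ^ 'n ^ 'n \<Rightarrow> real ^ 'n ^ 'n" where
  "dinv A = (\<chi> i j. if i = j then 1 / deg A i else 0)"

lemma sum_diag_l: "(\<Sum>k\<in>(UNIV::'a::finite set). (if i = k then a else 0) * f k) = (a * f i :: real)"
proof -
  have "(\<Sum>k\<in>(UNIV::'a::finite set). (if i = k then a else 0) * f k) = (\<Sum>k\<in>(UNIV::'a::finite set). if i = k then a * f k else 0)"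
    by (rule sum.cong) auto
  then show ?thesis using sum.delta[of UNIV i "\<lambda>k. a * f k"] by simp
qed

lemma sum_diag_r: "(\<Sum>k\<in>(UNIV::'a::finite set). f k * (if k = j then a else 0)) = (f j * a :: real)"
proof -
  have "(\<Sum>k\<in>(UNIV::'a::finite set). f k * (if k = j then a else 0)) = (\<Sum>k\<in>(UNIV::'a::finite set). if j = k then f k * a else 0)"
    by (rule sum.cong) auto
  then show ?thesis using sum.delta[of UNIV j "\<lambda>k. f k * a"] by simp
qed

locale wg =
  fixes A :: "real ^ 'n ^ 'n"
  assumes card2: "CARD('n) \<ge> 2" and wgA: "weighted_graph A" and conA: "graph_connected A"
begin

abbreviation "d \<equiv> deg A"
abbreviation "W \<equiv> lazy_walk A"
abbreviation "R \<equiv> {(i, j). A $ i $ j > 0}"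

lemma symA: "A $ i $ j = A $ j $ i" using wgA by (simp add: weighted_graph_def)
lemma nonnegA: "A $ i $ j \<ge> 0" using wgA by (simp add: weighted_graph_def)
lemma diagA: "A $ i $ i = 0" using wgA by (simp add: weighted_graph_def)
lemma reach: "(u, v) \<in> R\<^sup>*" using conA by (simp add: graph_connected_def)

lemma colsum: "(\<Sum>i\<in>UNIV. A $ i $ j) = d j"
  unfolding deg_def by (simp add: symA)

lemma deg_pos: "d i > 0"
proof -
  have "\<exists>j::'n. j \<noteq> i"
  proof (rule ccontr)
    assume "\<not> (\<exists>j::'n. j \<noteq> i)"
    then have "(UNIV::'n set) \<subseteq> {i}" by auto
    then have "CARD('n) \<le> card {i}" by (intro card_mono) auto
    then show False using card2 by simp
  qed
  then obtain j where "j \<noteq> i" by auto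
  from reach[of i j] this obtain k where "(i, k) \<in> R"
    by (metis converse_rtranclE)
  then have "A $ i $ k > 0" by simp
  moreover have "A $ i $ k \<le> d i" unfolding deg_def
    by (rule member_le_sum) (auto simp: nonnegA)
  ultimately show ?thesis by linarith
qed

lemma D_entry: "degree_matrix A $ i $ j = (if i = j then d i else 0)"
  by (simp add: degree_matrix_def deg_def)

lemma Dinv_eq: "matrix_inv (degree_matrix A) = dinv A"
proof (rule matrix_inv_eqI)
  have "(degree_matrix A ** dinv A) $ i $ j = mat 1 $ i $ j" for i j
    using deg_pos[of i] deg_pos[of j] by (auto simp add: mm_entry D_entry sum_diag_l dinv_def mat_def)
  then show "degree_matrix A ** dinv A = mat 1" by (simp add: vec_eq_iff)
  have "(dinv A ** degree_matrix A) $ i $ j = mat 1 $ i $ j" for i j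
    using deg_pos[of i] deg_pos[of j] by (auto simp add: mm_entry D_entry sum_diag_l dinv_def mat_def)
  then show "dinv A ** degree_matrix A = mat 1" by (simp add: vec_eq_iff)
qed

lemma W_entry: "W $ i $ j = (if i = j then 1/2 else 0) + A $ i $ j / (2 * d j)"
  by (simp add: lazy_walk_def Dinv_eq mm_entry dinv_def mat_def if_distrib if_distribR sum.delta'
      cong: if_cong)

lemma W_colstoch: "colstoch W"
proof -
  have "(\<Sum>i\<in>UNIV. W $ i $ j) = 1" for j
  proof -
    have "(\<Sum>i\<in>UNIV. W $ i $ j) = (\<Sum>i\<in>UNIV. (if i = j then 1/2 else 0)) + (\<Sum>i\<in>UNIV. A $ i $ j) / (2 * d j)"
      by (simp add: W_entry sum.distrib sum_divide_distrib)
    also have "\<dots> = 1" using deg_pos[of j] by (simp add: colsum)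
    finally show ?thesis .
  qed
  moreover have "W $ i $ j \<ge> 0" for i j
    using deg_pos[of j] nonnegA[of i j] by (simp add: W_entry)
  ultimately show ?thesis by (simp add: colstoch_def)
qed

lemma W_diag: "W $ i $ i \<ge> 1/2"
  using deg_pos[of i] by (simp add: W_entry diagA)

lemma W_edge: "A $ i $ j > 0 \<Longrightarrow> W $ i $ j > 0"
  using deg_pos[of j] nonnegA[of j j] by (simp add: W_entry add_pos_nonneg)

definition "s = (\<Sum>i\<in>UNIV. d i)"

lemma s_pos: "s > 0" unfolding s_def using deg_pos
  by (simp add: sum_pos)

lemma stationary_entry: "stationary A $ i = d i / s"
proof -
  have "degree_matrix A *v ones = (\<chi> i. d i)"
    by (simp add: vec_eq_iff mv_entry D_entry ones_def if_distrib if_distribR sum.delta' cong: if_cong)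
  moreover have "ones \<bullet> (\<chi> i. d i) = s" by (simp add: inner_vec_def ones_def s_def)
  ultimately show ?thesis by (simp add: stationary_def)
qed

lemma stationary_sum: "(\<Sum>i\<in>UNIV. stationary A $ i) = 1"
  using s_pos by (simp add: stationary_entry sum_divide_distrib[symmetric] s_def[symmetric])

lemma W_stationary: "W *v stationary A = stationary A"
proof -
  have "(W *v stationary A) $ i = stationary A $ i" for i
  proof -
    have "(W *v stationary A) $ i = (\<Sum>j\<in>UNIV. ((if i = j then 1/2 else 0) + A $ i $ j / (2 * d j)) * (d j / s))"
      by (simp add: mv_entry W_entry stationary_entry)
    also have "\<dots> = (\<Sum>j\<in>UNIV. (if i = j then 1/2 * (d i / s) else 0) + A $ i $ j / (2 * s))"
    proof (intro sum.cong refl)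
      fix j
      have "d j \<noteq> 0" using deg_pos[of j] by simp
      then show "((if i = j then 1/2 else 0) + A $ i $ j / (2 * d j)) * (d j / s) = (if i = j then 1/2 * (d i / s) else 0) + A $ i $ j / (2 * s)"
        by (cases "i = j") (simp_all add: field_simps diagA)
    qed
    also have "\<dots> = 1/2 * (d i / s) + d i / (2 * s)"
      by (simp add: sum.distrib deg_def sum_divide_distrib)
    also have "\<dots> = stationary A $ i" by (simp add: stationary_entry)
    finally show ?thesis .
  qed
  then show ?thesis by (simp add: vec_eq_iff)
qed

lemma Wpow_stationary: "matpow W t *v stationary A = stationary A"
  by (induction t) (simp_all flip: matrix_vector_mul_assoc add: W_stationary)

end

context wg begin

lemma Wpow_nonneg: "matpow W k $ i $ j \<ge> 0"
  using colstoch_matpow[OF W_colstoch] by (simp add: colstoch_def)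

lemma Wpow_step: "matpow W (Suc k) $ i $ j \<ge> W $ i $ c * matpow W k $ c $ j"
proof -
  have "matpow W (Suc k) $ i $ j = (\<Sum>c\<in>UNIV. W $ i $ c * matpow W k $ c $ j)"
    by (simp add: mm_entry)
  also have "\<dots> \<ge> W $ i $ c * matpow W k $ c $ j"
    using W_colstoch Wpow_nonneg
    by (intro member_le_sum) (auto simp: colstoch_def)
  finally show ?thesis .
qed

lemma Wpow_mono: "matpow W k $ i $ j > 0 \<Longrightarrow> matpow W (k + m) $ i $ j > 0"
proof (induction m)
  case 0 then show ?case by simp
next
  case (Suc m)
  have "matpow W (Suc (k + m)) $ i $ j \<ge> W $ i $ i * matpow W (k + m) $ i $ j"
    by (rule Wpow_step)
  moreover have "W $ i $ i * matpow W (k + m) $ i $ j > 0"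
    using W_diag[of i] Suc by simp
  ultimately show ?case by simp
qed

lemma Wpow_reach: "(u, v) \<in> R\<^sup>* \<Longrightarrow> \<exists>k. matpow W k $ v $ u > 0"
proof (induction rule: rtrancl_induct)
  case base
  show ?case by (rule exI[of _ 0]) (simp add: mat_def)
next
  case (step y z)
  then obtain k where k: "matpow W k $ y $ u > 0" by blast
  have "A $ z $ y > 0" using step(2) symA by simp
  then have "W $ z $ y > 0" by (rule W_edge)
  then have "W $ z $ y * matpow W k $ y $ u > 0" using k by simp
  then have "matpow W (Suc k) $ z $ u > 0" using Wpow_step[where k=k and i=z and j=u and c=y] by linarith
  then show ?case by blast
qed

lemma exists_pos_power: "\<exists>K>0. \<forall>i j. matpow W K $ i $ j > 0"
proof -
  define kf where "kf = (\<lambda>(i, j). SOME k. matpow W k $ i $ j > 0)"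
  have kf: "matpow W (kf (i, j)) $ i $ j > 0" for i j
    using someI_ex[OF Wpow_reach[OF reach[of j i]]] unfolding kf_def by simp
  define K where "K = Suc (Max (range kf))"
  have "matpow W K $ i $ j > 0" for i j
  proof -
    have "kf (i, j) \<le> Max (range kf)" by (rule Max_ge) auto
    then have "kf (i, j) + (K - kf (i, j)) = K" unfolding K_def by arith
    then show ?thesis using Wpow_mono[OF kf[of i j], of "K - kf (i, j)"] by simp
  qed
  then show ?thesis unfolding K_def by blast
qed

lemma contraction:
  "\<exists>K>0. \<exists>c. 0 < c \<and> c < 1 \<and> (\<forall>x. (\<Sum>i\<in>UNIV. x $ i) = 0 \<longrightarrow> norm1 (matpow W K *v x) \<le> c * norm1 x)"
proof -
  obtain K where K: "K > 0" "\<And>i j. matpow W K $ i $ j > 0" using exists_pos_power by blast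
  define \<delta> where "\<delta> = Min (range (\<lambda>(i, j). matpow W K $ i $ j))"
  have \<delta>pos: "\<delta> > 0" unfolding \<delta>_def using K(2)
    by (subst Min_gr_iff) auto
  have \<delta>le: "\<delta> \<le> matpow W K $ i $ j" for i j
    unfolding \<delta>_def by (rule Min_le) (auto intro!: image_eqI[where x="(i,j)"])
  define c where "c = max (1 - real CARD('n) * \<delta>) (1/2)"
  have "c < 1" unfolding c_def using \<delta>pos by simp
  moreover have "c > 0" unfolding c_def by simp
  moreover have "norm1 (matpow W K *v x) \<le> c * norm1 x" if "(\<Sum>i\<in>UNIV. x $ i) = 0" for x
  proof -
    have "norm1 (matpow W K *v x) \<le> (1 - real CARD('n) * \<delta>) * norm1 x"
      using that by (intro dobrushin colstoch_matpow W_colstoch \<delta>le) simp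
    also have "\<dots> \<le> c * norm1 x"
      unfolding c_def by (intro mult_right_mono) (auto simp: norm1_def)
    finally show ?thesis .
  qed
  ultimately show ?thesis using K(1) by blast
qed

lemma decay:
  assumes K: "K > 0" and c: "0 < c" and cx: "\<And>x. (\<Sum>i\<in>UNIV. x $ i) = 0 \<Longrightarrow> norm1 (matpow W K *v x) \<le> c * norm1 x"
  shows "(\<Sum>i\<in>UNIV. x $ i) = 0 \<Longrightarrow> norm1 (matpow W t *v x) \<le> c ^ (t div K) * norm1 x"
proof (induction t arbitrary: x rule: less_induct)
  case (less t)
  show ?case
  proof (cases "t < K")
    case True
    then show ?thesis using colstoch_nonexp[OF colstoch_matpow[OF W_colstoch]] by simp
  next
    case False
    define y where "y = matpow W K *v x"
    have ys: "(\<Sum>i\<in>UNIV. y $ i) = 0"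
      unfolding y_def using less.prems colstoch_sum[OF colstoch_matpow[OF W_colstoch]] by simp
    have "matpow W t = matpow W (t - K) ** matpow W K"
      using False matpow_add[of W "t - K" K] by simp
    then have "matpow W t *v x = matpow W (t - K) *v y"
      by (simp add: y_def matrix_vector_mul_assoc)
    moreover have "norm1 (matpow W (t - K) *v y) \<le> c ^ ((t - K) div K) * norm1 y"
      using less.IH[of "t - K" y] K False ys by simp
    moreover have "norm1 y \<le> c * norm1 x" unfolding y_def using cx less.prems by blast
    moreover have "t div K = Suc ((t - K) div K)" using K False by (simp add: le_div_geq)
    ultimately show ?thesis using c
      by (smt (verit, ccfv_SIG) mult.assoc mult.commute mult_left_mono power_Suc zero_le_power)
  qed
qed

lemma summable_orbit:
  assumes "(\<Sum>i\<in>UNIV. x $ i) = 0"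
  shows "summable (\<lambda>t. matpow W t *v x)"
proof -
  obtain K c where K: "K > 0" and c: "0 < c" "c < 1"
    and cx: "\<And>x. (\<Sum>i\<in>UNIV. x $ i) = 0 \<Longrightarrow> norm1 (matpow W K *v x) \<le> c * norm1 x"
    using contraction by blast
  define r where "r = root K c"
  have r: "0 < r" "r < 1" unfolding r_def using K c by (auto simp: real_root_lt_1_iff)
  have rK: "r ^ K = c" unfolding r_def using K c by (simp add: real_root_pow_pos2)
  have b: "c ^ (t div K) \<le> r ^ t / c" for t
  proof -
    have "t mod K < K" using K by simp
    moreover have "t = K * (t div K) + t mod K" by simp
    ultimately have "t < K * (t div K) + K" by linarith
    then have "r ^ (K * (t div K) + K) \<le> r ^ t" using r by (intro power_decreasing) auto
    then have "c ^ (t div K) * c \<le> r ^ t" by (simp add: rK power_add power_mult)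
    then show ?thesis using c by (simp add: field_simps)
  qed
  show ?thesis
  proof (rule summable_comparison_test)
    show "\<exists>N. \<forall>t\<ge>N. norm (matpow W t *v x) \<le> (norm1 x / c) * r ^ t"
    proof (intro exI allI impI)
      fix t
      have "norm (matpow W t *v x) \<le> norm1 (matpow W t *v x)"
        unfolding norm1_def by (rule norm_le_l1_cart)
      also have "\<dots> \<le> c ^ (t div K) * norm1 x" by (rule decay[OF K c(1) cx assms])
      also have "\<dots> \<le> (r ^ t / c) * norm1 x"
        by (intro mult_right_mono b) (auto simp: norm1_def)
      finally show "norm (matpow W t *v x) \<le> (norm1 x / c) * r ^ t" by (simp add: mult.commute)
    qed
    show "summable (\<lambda>t. norm1 x / c * r ^ t)"
      using r by (intro summable_mult summable_geometric) simp
  qed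
qed

end

lemma mdiff_l: "(X::real^'n^'n) ** (Y - Z) = X ** Y - X ** Z"
  by (simp add: vec_eq_iff mm_entry algebra_simps sum_subtractf)
lemma mdiff_r: "((X::real^'n^'n) - Y) ** Z = X ** Z - Y ** Z"
  by (simp add: vec_eq_iff mm_entry algebra_simps sum_subtractf)
lemma madd_r: "((X::real^'n^'n) + Y) ** Z = X ** Z + Y ** Z"
  by (simp add: vec_eq_iff mm_entry algebra_simps sum.distrib)
lemma transpose_diff: "transpose ((X::real^'n^'n) - Y) = transpose X - transpose Y"
  by (simp add: vec_eq_iff transpose_def)

lemma penrose_construct:
  fixes L P B :: "real^'n^'n"
  assumes LP: "L ** P = 0" and PL: "P ** L = 0" and PP: "P ** P = P" and tP: "transpose P = P"
    and BM: "B ** (L + P) = mat 1" and MB: "(L + P) ** B = mat 1"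
  shows "penrose L (B - P) \<and> (B - P) ** L = mat 1 - P"
proof -
  define M where "M = L + P"
  have LM: "L = M - P" unfolding M_def by simp
  have MP: "M ** P = P" unfolding M_def using LP PP by (simp add: madd_r)
  have PM: "P ** M = P" unfolding M_def using PL PP by (simp add: matrix_add_ldistrib)
  have BP: "B ** P = P"
  proof -
    have "B ** P = B ** (M ** P)" using MP by simp
    also have "\<dots> = (B ** M) ** P" by (simp add: matrix_mul_assoc)
    finally show ?thesis using BM unfolding M_def by simp
  qed
  have PB: "P ** B = P"
  proof -
    have "P ** B = (P ** M) ** B" using PM by simp
    also have "\<dots> = P ** (M ** B)" by (simp add: matrix_mul_assoc)
    finally show ?thesis using MB unfolding M_def by simp
  qed
  have LX: "L ** (B - P) = mat 1 - P"
    using LP MB PB unfolding M_def by (simp add: mdiff_l mdiff_r madd_r eq_diff_eq)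
  have XL: "(B - P) ** L = mat 1 - P"
    using PL BM BP unfolding M_def by (simp add: mdiff_r mdiff_l matrix_add_ldistrib eq_diff_eq)
  have PX: "P ** (B - P) = 0" using PB PP by (simp add: mdiff_l)
  have 1: "L ** (B - P) ** L = L" using LX PL by (simp add: mdiff_r)
  have 2: "(B - P) ** L ** (B - P) = B - P" using XL PX by (simp add: mdiff_r)
  have 3: "transpose (mat 1 - P) = mat 1 - P" using tP by (simp add: transpose_diff)
  show ?thesis using 1 2 3 LX XL by (simp add: penrose_def)
qed

lemma sum_diag_l2: "(\<Sum>k\<in>(UNIV::'a::finite set). (if i = k then a k else 0) * f k) = (a i * f i :: real)"
proof -
  have "(\<Sum>k\<in>(UNIV::'a::finite set). (if i = k then a k else 0) * f k) = (\<Sum>k\<in>UNIV. if i = k then a k * f k else 0)"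
    by (rule sum.cong) auto
  then show ?thesis using sum.delta[of UNIV i "\<lambda>k. a k * f k"] by simp
qed

lemma sum_diag_r2: "(\<Sum>k\<in>(UNIV::'a::finite set). f k * (if k = j then a k else 0)) = (f j * a j :: real)"
proof -
  have "(\<Sum>k\<in>(UNIV::'a::finite set). f k * (if k = j then a k else 0)) = (\<Sum>k\<in>UNIV. if j = k then f k * a k else 0)"
    by (rule sum.cong) auto
  then show ?thesis using sum.delta[of UNIV j "\<lambda>k. f k * a k"] by simp
qed

context wg begin

abbreviation "L \<equiv> laplacian A"
definition "P = (1 / real CARD('n)) *\<^sub>R ((\<chi> i j. 1) :: real^'n^'n)"

lemma P_entry: "P $ i $ j = 1 / real CARD('n)" by (simp add: P_def)

lemma L_entry: "L $ i $ j = (if i = j then d i else 0) - A $ i $ j"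
  by (simp add: laplacian_def D_entry)

lemma L_rowsum: "(\<Sum>k\<in>UNIV. L $ i $ k) = 0"
  by (simp add: L_entry sum_subtractf deg_def)

lemma L_colsum: "(\<Sum>k\<in>UNIV. L $ k $ j) = 0"
  by (simp add: L_entry sum_subtractf colsum)

lemma LP: "L ** P = 0"
  by (simp add: vec_eq_iff mm_entry P_entry sum_divide_distrib[symmetric] L_rowsum)

lemma PL: "P ** L = 0"
  by (simp add: vec_eq_iff mm_entry P_entry sum_divide_distrib[symmetric] L_colsum)

lemma PP: "P ** P = P"
  by (simp add: vec_eq_iff mm_entry P_entry)

lemma tP: "transpose P = P"
  by (simp add: vec_eq_iff transpose_def P_entry)

lemma Lv_entry: "(L *v v) $ i = (\<Sum>j\<in>UNIV. A $ i $ j * (v $ i - v $ j))"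
proof -
  have "(L *v v) $ i = (\<Sum>j\<in>UNIV. (if i = j then d i else 0) * v $ j) - (\<Sum>j\<in>UNIV. A $ i $ j * v $ j)"
    by (simp add: mv_entry L_entry left_diff_distrib sum_subtractf)
  also have "\<dots> = d i * v $ i - (\<Sum>j\<in>UNIV. A $ i $ j * v $ j)" by (simp add: sum_diag_l)
  also have "\<dots> = (\<Sum>j\<in>UNIV. A $ i $ j * (v $ i - v $ j))"
    by (simp add: deg_def right_diff_distrib sum_subtractf sum_distrib_right)
  finally show ?thesis .
qed

lemma quad: "2 * (\<Sum>i\<in>UNIV. v $ i * (L *v v) $ i) = (\<Sum>i\<in>UNIV. \<Sum>j\<in>UNIV. A $ i $ j * (v $ i - v $ j)^2)"
proof -
  define S1 where "S1 = (\<Sum>i\<in>UNIV. \<Sum>j\<in>UNIV. A $ i $ j * (v $ i * (v $ i - v $ j)))"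
  have a: "(\<Sum>i\<in>UNIV. v $ i * (L *v v) $ i) = S1"
    unfolding S1_def Lv_entry by (simp add: sum_distrib_left algebra_simps)
  have "S1 = (\<Sum>j\<in>UNIV. \<Sum>i\<in>UNIV. A $ i $ j * (v $ i * (v $ i - v $ j)))"
    unfolding S1_def by (rule sum.swap)
  also have "\<dots> = (\<Sum>i\<in>UNIV. \<Sum>j\<in>UNIV. A $ i $ j * (v $ j * (v $ j - v $ i)))"
    by (simp add: symA)
  finally have b: "S1 = \<dots>" .
  have "2 * S1 = S1 + (\<Sum>i\<in>UNIV. \<Sum>j\<in>UNIV. A $ i $ j * (v $ j * (v $ j - v $ i)))"
    using b by simp
  also have "\<dots> = (\<Sum>i\<in>UNIV. \<Sum>j\<in>UNIV. A $ i $ j * (v $ i - v $ j)^2)"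
    unfolding S1_def sum.distrib[symmetric]
    by (intro sum.cong refl) (simp add: power2_eq_square algebra_simps)
  finally show ?thesis using a by simp
qed

lemma L_kernel: assumes "L *v v = 0" shows "v $ i = v $ j"
proof -
  have "(\<Sum>i\<in>UNIV. \<Sum>j\<in>UNIV. A $ i $ j * (v $ i - v $ j)^2) = 0"
    using quad[of v] assms by simp
  then have z: "A $ i $ j * (v $ i - v $ j)^2 = 0" for i j
    using nonnegA
    by (simp add: sum_nonneg_eq_0_iff sum_nonneg)
  have "(i, j) \<in> R\<^sup>* \<Longrightarrow> v $ i = v $ j"
  proof (induction rule: rtrancl_induct)
    case base then show ?case by simp
  next
    case (step y z')
    then have "A $ y $ z' > 0" by simp
    then have "v $ y = v $ z'" using z[of y z'] by simp
    then show ?case using step by simp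
  qed
  then show ?thesis using reach by blast
qed

lemma M_inj: assumes "(L + P) *v v = 0" shows "v = 0"
proof -
  have Pv: "(P *v v) $ i = (\<Sum>j\<in>UNIV. v $ j) / real CARD('n)" for i
    by (simp add: mv_entry P_entry sum_divide_distrib[symmetric])
  have sL: "(\<Sum>i\<in>UNIV. (L *v v) $ i) = 0"
  proof -
    have "(\<Sum>i\<in>UNIV. (L *v v) $ i) = (\<Sum>j\<in>UNIV. (\<Sum>i\<in>UNIV. L $ i $ j) * v $ j)"
      by (simp add: mv_entry sum_distrib_right) (rule sum.swap)
    then show ?thesis by (simp add: L_colsum)
  qed
  have "0 = (\<Sum>i\<in>UNIV. ((L + P) *v v) $ i)" using assms by simp
  also have "\<dots> = (\<Sum>i\<in>UNIV. (L *v v) $ i) + (\<Sum>i\<in>UNIV. (P *v v) $ i)"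
    by (simp add: matrix_vector_mult_add_rdistrib sum.distrib)
  also have "\<dots> = (\<Sum>j\<in>UNIV. v $ j)" using sL by (simp add: Pv)
  finally have sv: "(\<Sum>j\<in>UNIV. v $ j) = 0" by simp
  then have "P *v v = 0" by (simp add: vec_eq_iff Pv)
  then have "L *v v = 0" using assms by (simp add: matrix_vector_mult_add_rdistrib)
  then have c: "v $ j = v $ i" for i j by (rule L_kernel)
  show ?thesis
  proof (simp add: vec_eq_iff, rule allI)
    fix i
    have "(\<Sum>j\<in>UNIV. v $ j) = (\<Sum>j\<in>(UNIV::'n set). v $ i)" using c[of _ i] by (intro sum.cong) auto
    also have "\<dots> = real CARD('n) * v $ i" by simp
    finally have "(\<Sum>j\<in>UNIV. v $ j) = real CARD('n) * v $ i" .
    then show "v $ i = 0" using sv by simp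
  qed
qed

lemma pinv_L: "pinv L ** L = mat 1 - P"
proof -
  obtain B where BM: "B ** (L + P) = mat 1"
    using M_inj matrix_left_invertible_ker[of "L + P"] by blast
  then have MB: "(L + P) ** B = mat 1" using matrix_left_right_inverse by blast
  have "penrose L (B - P) \<and> (B - P) ** L = mat 1 - P"
    by (rule penrose_construct[OF LP PL PP tP BM MB])
  then show ?thesis using pinv_eqI by metis
qed

end

context wg begin

lemma L_dinv: "L ** dinv A = 2 *\<^sub>R (mat 1 - W)"
proof -
  have "(L ** dinv A) $ i $ j = (2 *\<^sub>R (mat 1 - W)) $ i $ j" for i j
  proof -
    have dj: "d j \<noteq> 0" using deg_pos[of j] by simp
    have "(L ** dinv A) $ i $ j = L $ i $ j * (1 / d j)"
      by (simp add: mm_entry dinv_def sum_diag_r2)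
    then show ?thesis using dj
      by (cases "i = j") (simp_all add: L_entry W_entry mat_def field_simps)
  qed
  then show ?thesis by (simp add: vec_eq_iff)
qed

theorem main:
  shows "summable (\<lambda>t. matpow W t *v indic u - stationary A)
    \<and> pinv L *v (indic u - stationary A)
      = (1/2) *\<^sub>R ((centering ** matrix_inv (degree_matrix A))
           *v (\<Sum>t. matpow W t *v indic u - stationary A))"
proof -
  define x0 where "x0 = indic u - stationary A"
  define f where "f = (\<lambda>t. matpow W t *v indic u - stationary A)"
  have f: "f t = matpow W t *v x0" for t
    unfolding f_def x0_def by (simp add: matrix_vector_mult_diff_distrib Wpow_stationary)
  have "(\<Sum>i\<in>UNIV. indic u $ i) = 1"
    by (simp add: indic_def)
  then have sx0: "(\<Sum>i\<in>UNIV. x0 $ i) = 0"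
    unfolding x0_def by (simp add: sum_subtractf stationary_sum)
  have sf: "summable f" unfolding f by (rule summable_orbit[OF sx0])
  define S where "S = suminf f"
  have "W *v S = (\<Sum>t. W *v f t)"
    unfolding S_def by (rule bounded_linear.suminf[OF matrix_vector_mul_bounded_linear sf])
  also have "\<dots> = (\<Sum>t. f (Suc t))"
    by (simp add: f matrix_vector_mul_assoc)
  also have "\<dots> = S - x0"
    unfolding S_def using suminf_split_head[OF sf] by (simp add: f)
  finally have WS: "W *v S = S - x0" .
  define y where "y = (1/2) *\<^sub>R (dinv A *v S)"
  have Ly: "L *v y = x0"
  proof -
    have "L *v y = (1/2) *\<^sub>R ((L ** dinv A) *v S)"
      unfolding y_def by (simp add: matrix_vector_mult_scaleR matrix_vector_mul_assoc)
    also have "\<dots> = (1/2) *\<^sub>R (2 *\<^sub>R (S - W *v S))"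
      by (simp add: L_dinv scaleR_matrix_vector_assoc[symmetric] matrix_vector_mult_diff_rdistrib)
    also have "\<dots> = x0" using WS by simp
    finally show ?thesis .
  qed
  have "pinv L *v x0 = (pinv L ** L) *v y"
    using Ly by (simp add: matrix_vector_mul_assoc[symmetric])
  also have "\<dots> = centering *v y"
    by (simp add: pinv_L centering_def P_def)
  also have "\<dots> = (1/2) *\<^sub>R ((centering ** matrix_inv (degree_matrix A)) *v S)"
    unfolding y_def by (simp add: Dinv_eq matrix_vector_mult_scaleR matrix_vector_mul_assoc)
  finally show ?thesis using sf unfolding f_def S_def x0_def by simp
qed

end

theorem lemma3p3:
  fixes A :: "real ^ 'n ^ 'n" and u :: 'n
  assumes "CARD('n) \<ge> 2"
    and "weighted_graph A"
    and "graph_connected A"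
  shows "summable (\<lambda>t. matpow (lazy_walk A) t *v indic u - stationary A)
    \<and> pinv (laplacian A) *v (indic u - stationary A)
      = (1/2) *\<^sub>R ((centering ** matrix_inv (degree_matrix A))
           *v (\<Sum>t. matpow (lazy_walk A) t *v indic u - stationary A))"
proof -
  interpret wg A using assms by unfold_locales
  show ?thesis by (rule main)
qed

end
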